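(* Let $\mu$ be a measure on the Borel subsets of $(0,\infty)$ with $\int_0^{\infty}\frac{\lambda}{\lambda^2 + 1} \,\mathrm{d}\mu(\lambda)< \infty$, let $\mathcal{R}=\{z\in\mathbb{C}:\Re(z)>0\}$, and define the analytic function $F_\mu:\mathcal{R}\to\mathbb{C}$ by $F_\mu(z)=\int_0^\infty\{e^{-\lambda z}-e^{-\lambda}\}\,\mathrm{d}\mu(\lambda)$. Then $\Phi=F_\mu$ satisfies: (a) for all $0<a<b<\infty$, $\lim_{y\to\pm\infty} e^{-\pi|y|}\int_a^b\left|\frac{\Phi(x+iy)}{x+iy}\right|\mathrm{d}x=0$; (b) for every $\eta>0$, $\sup_{x\ge\eta}\int_{-\infty}^\infty\left|\frac{\Phi(x+iy)}{x+iy}\right|e^{-\pi|y|}\,\mathrm{d}y<\infty$; (c) $\lim_{x\to\infty}\int_{-\infty}^\infty\left|\frac{\Phi(x+iy)}{x+iy}\right|e^{-\pi|y|}\,\mathrm{d}y=0$. *)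

theory Defs
  imports "HOL-Analysis.Analysis"
begin

definition F_mu :: "real measure \<Rightarrow> complex \<Rightarrow> complex" where
  "F_mu M z = (\<integral>l. (exp (- (complex_of_real l) * z) - complex_of_real (exp (- l))) \<partial>M)"

end

theory Submission
  imports Defs "HOL-Probability.Probability" "HOL-Real_Asymp.Real_Asymp"
begin

lemma g_lip:
  fixes l :: real and z :: complex
  assumes "l > 0" "Re z > 0"
  shows "norm (exp (- complex_of_real l * z) - complex_of_real (exp (- l))) \<le> l * norm (z - 1)"
proof -
  have "norm ((\<lambda>w. exp (- complex_of_real l * w)) z - (\<lambda>w. exp (- complex_of_real l * w)) 1) \<le> l * norm (z - 1)"
  proof (rule field_differentiable_bound[where S="{w. Re w > 0}" and f'="\<lambda>w. - complex_of_real l * exp (- complex_of_real l * w)"])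
    show "convex {w. Re w > 0}" using convex_halfspace_Re_gt[of 0] by simp
    fix w assume w: "w \<in> {w. Re w > 0}"
    show "((\<lambda>w. exp (- complex_of_real l * w)) has_field_derivative - complex_of_real l * exp (- complex_of_real l * w)) (at w within {w. 0 < Re w})"
      by (auto intro!: derivative_eq_intros)
    have "norm (- complex_of_real l * exp (- complex_of_real l * w)) = l * exp (- l * Re w)"
      using assms by (simp add: norm_mult norm_exp_eq_Re)
    also have "\<dots> \<le> l * 1" using assms w by (intro mult_left_mono) auto
    finally show "norm (- complex_of_real l * exp (- complex_of_real l * w)) \<le> l" by simp
  qed (use assms in auto)
  moreover have "complex_of_real (exp (- l)) = exp (- complex_of_real l * 1)"
    by (simp flip: exp_of_real)
  ultimately show ?thesis by simp
qed

lemma exp_le_inv: "t > 0 \<Longrightarrow> exp (- t) \<le> 1 / (t::real)"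
proof -
  assume t: "t > 0"
  have "t \<le> exp t" using exp_ge_add_one_self[of t] by linarith
  then show ?thesis using t by (simp add: exp_minus field_simps)
qed

lemma g_bound:
  fixes l \<eta> :: real and z :: complex
  assumes l: "l > 0" and eta: "\<eta> > 0" "Re z \<ge> \<eta>"
  shows "norm (exp (- complex_of_real l * z) - complex_of_real (exp (- l))) / norm z
     \<le> (2 * (1 + 1/\<eta>)^2) * (l / (l\<^sup>2 + 1))"
proof -
  have zpos: "norm z \<ge> \<eta>" using eta abs_Re_le_cmod[of z] by linarith
  have zp: "norm z > 0" using zpos eta by linarith
  have lq: "l / (l\<^sup>2 + 1) > 0" using l by (simp add: add_pos_nonneg)
  have c1: "1 \<le> (1 + 1/\<eta>)" using eta by simp
  show ?thesis
  proof (cases "l \<le> 1")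
    case True
    have "norm (exp (- complex_of_real l * z) - complex_of_real (exp (- l))) \<le> l * norm (z - 1)"
      using g_lip[of l z] l eta by auto
    also have "\<dots> \<le> l * (norm z + 1)" using l norm_triangle_ineq4[of z 1] by (intro mult_left_mono) auto
    finally have A: "norm (exp (- complex_of_real l * z) - complex_of_real (exp (- l))) / norm z \<le> l * (1 + 1 / norm z)"
      using zp by (simp add: divide_right_mono field_simps)
    have "1 / norm z \<le> 1 / \<eta>" using zpos eta by (simp add: frac_le)
    then have B: "l * (1 + 1 / norm z) \<le> l * (1 + 1/\<eta>)" using l by (intro mult_left_mono) auto
    have "l\<^sup>2 \<le> 1" using l True by (simp add: power_le_one)
    then have "l * (l\<^sup>2 + 1) \<le> l * 2" using l by (intro mult_left_mono) auto
    then have C: "l \<le> 2 * (l / (l\<^sup>2 + 1))" using l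
      by (simp add: pos_le_divide_eq add_pos_nonneg mult.commute)
    have D: "l * (1 + 1/\<eta>) \<le> 2 * (l / (l\<^sup>2 + 1)) * (1 + 1/\<eta>)" using C c1 by (intro mult_right_mono) auto
    have "(1 + 1/\<eta>) * 1 \<le> (1 + 1/\<eta>) * (1 + 1/\<eta>)" using c1 by (intro mult_left_mono) auto
    then have E: "(1 + 1/\<eta>) \<le> (1 + 1/\<eta>)^2" by (simp add: power2_eq_square)
    have "2 * (l / (l\<^sup>2 + 1)) * (1 + 1/\<eta>) \<le> 2 * (l / (l\<^sup>2 + 1)) * (1 + 1/\<eta>)^2"
      using E lq by (intro mult_left_mono) auto
    with A B D show ?thesis by (simp add: algebra_simps)
  next
    case False
    have "norm (exp (- complex_of_real l * z) - complex_of_real (exp (- l)))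
        \<le> norm (exp (- complex_of_real l * z)) + norm (complex_of_real (exp (- l)))"
      by (rule norm_triangle_ineq4)
    also have "norm (exp (- complex_of_real l * z)) = exp (- (l * Re z))" by (simp add: norm_exp_eq_Re)
    also have "\<dots> \<le> exp (- (l * \<eta>))" using l eta by simp
    also have "\<dots> \<le> 1 / (l * \<eta>)" using l eta by (intro exp_le_inv) simp
    also have "norm (complex_of_real (exp (- l))) \<le> 1 / l" using exp_le_inv[of l] l by simp
    finally have A0: "norm (exp (- complex_of_real l * z) - complex_of_real (exp (- l))) \<le> 1 / (l * \<eta>) + 1 / l" by simp
    have "1 / (l * \<eta>) + 1 / l = (1 + 1/\<eta>) / l" using l eta by (simp add: field_simps)
    with A0 have A: "norm (exp (- complex_of_real l * z) - complex_of_real (exp (- l))) \<le> (1 + 1/\<eta>) / l" by simp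
    have "1 \<le> l\<^sup>2" using l False by (simp add: one_le_power)
    then have C: "1 / l \<le> 2 * (l / (l\<^sup>2 + 1))" using l
      by (simp add: field_simps add_pos_nonneg power2_eq_square)
    have "norm (exp (- complex_of_real l * z) - complex_of_real (exp (- l))) / norm z \<le> ((1 + 1/\<eta>) / l) / \<eta>"
      using A zpos eta zp by (meson divide_left_mono divide_right_mono dual_order.trans norm_ge_zero order.strict_implies_order mult_pos_pos)
    also have "\<dots> = (1 + 1/\<eta>) * (1/\<eta>) * (1 / l)" by simp
    also have "\<dots> \<le> (1 + 1/\<eta>) * (1 + 1/\<eta>) * (2 * (l / (l\<^sup>2 + 1)))"
      using C c1 eta l by (intro mult_mono) auto
    also have "\<dots> = (2 * (1 + 1/\<eta>)^2) * (l / (l\<^sup>2 + 1))"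
      by (simp only: power2_eq_square mult_ac)
    finally show ?thesis .
  qed
qed


lemma meas_M:
  assumes "sets M = sets (restrict_space borel {0<..})" "f \<in> borel_measurable (borel :: real measure)"
  shows "f \<in> borel_measurable M"
  using measurable_restrict_space1[OF assms(2), of "{0<..}"] measurable_cong_sets[OF assms(1) refl] by blast

lemma F_bound:
  "ennreal (norm (F_mu M z / z)) \<le> (\<integral>\<^sup>+ l. ennreal (norm (exp (- complex_of_real l * z) - complex_of_real (exp (- l))) / norm z) \<partial>M)"
proof (cases "integrable M (\<lambda>l. exp (- complex_of_real l * z) - complex_of_real (exp (- l)))")
  case True
  then have "integrable M (\<lambda>l. (exp (- complex_of_real l * z) - complex_of_real (exp (- l))) / z)" by simp
  then have "norm (integral\<^sup>L M (\<lambda>l. (exp (- complex_of_real l * z) - complex_of_real (exp (- l))) / z))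
     \<le> (\<integral>\<^sup>+ l. norm ((exp (- complex_of_real l * z) - complex_of_real (exp (- l))) / z) \<partial>M)"
    by (rule integral_norm_bound_ennreal)
  then show ?thesis by (simp add: F_mu_def norm_divide)
next
  case False
  then show ?thesis by (simp add: F_mu_def not_integrable_integral_eq)
qed

lemma F_bound_eta:
  assumes space_M: "space M = {0<..}" and sets_M: "sets M = sets (restrict_space borel {0<..})"
    and eta: "\<eta> > 0" "Re z \<ge> \<eta>"
  shows "ennreal (norm (F_mu M z / z)) \<le> ennreal (2 * (1 + 1/\<eta>)^2) * (\<integral>\<^sup>+ l. ennreal (l / (l\<^sup>2 + 1)) \<partial>M)"
proof -
  have "ennreal (norm (F_mu M z / z)) \<le> (\<integral>\<^sup>+ l. ennreal (norm (exp (- complex_of_real l * z) - complex_of_real (exp (- l))) / norm z) \<partial>M)"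
    by (rule F_bound)
  also have "\<dots> \<le> (\<integral>\<^sup>+ l. ennreal (2 * (1 + 1/\<eta>)^2) * ennreal (l / (l\<^sup>2 + 1)) \<partial>M)"
  proof (rule nn_integral_mono)
    fix l assume "l \<in> space M"
    then have l: "l > 0" using space_M by auto
    have "norm (exp (- complex_of_real l * z) - complex_of_real (exp (- l))) / norm z \<le> (2 * (1 + 1/\<eta>)^2) * (l / (l\<^sup>2 + 1))"
      using g_bound[OF l eta] .
    then have "ennreal (norm (exp (- complex_of_real l * z) - complex_of_real (exp (- l))) / norm z) \<le> ennreal ((2 * (1 + 1/\<eta>)^2) * (l / (l\<^sup>2 + 1)))"
      by (rule ennreal_leI)
    also have "\<dots> = ennreal (2 * (1 + 1/\<eta>)^2) * ennreal (l / (l\<^sup>2 + 1))"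
      using l by (intro ennreal_mult) auto
    finally show "ennreal (norm (exp (- complex_of_real l * z) - complex_of_real (exp (- l))) / norm z) \<le> ennreal (2 * (1 + 1/\<eta>)^2) * ennreal (l / (l\<^sup>2 + 1))" .
  qed
  also have "\<dots> = ennreal (2 * (1 + 1/\<eta>)^2) * (\<integral>\<^sup>+ l. ennreal (l / (l\<^sup>2 + 1)) \<partial>M)"
    by (rule nn_integral_cmult) (rule meas_M[OF sets_M], measurable)
  finally show ?thesis .
qed

lemma F_bound_R:
  assumes space_M: "space M = {0<..}"
    and z: "Re z \<ge> 1" "1 \<le> R" "R \<le> norm z"
  shows "ennreal (norm (F_mu M z / z)) \<le> (\<integral>\<^sup>+ l. ennreal (min (2/R) (8 * (l / (l\<^sup>2 + 1)))) \<partial>M)"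
proof -
  have "ennreal (norm (F_mu M z / z)) \<le> (\<integral>\<^sup>+ l. ennreal (norm (exp (- complex_of_real l * z) - complex_of_real (exp (- l))) / norm z) \<partial>M)"
    by (rule F_bound)
  also have "\<dots> \<le> (\<integral>\<^sup>+ l. ennreal (min (2/R) (8 * (l / (l\<^sup>2 + 1)))) \<partial>M)"
  proof (rule nn_integral_mono)
    fix l assume "l \<in> space M"
    then have l: "l > 0" using space_M by auto
    have b1: "norm (exp (- complex_of_real l * z) - complex_of_real (exp (- l))) / norm z \<le> (2 * (1 + 1/1)^2) * (l / (l\<^sup>2 + 1))"
      using g_bound[OF l _ z(1)] by simp
    have "norm (exp (- complex_of_real l * z) - complex_of_real (exp (- l)))
        \<le> norm (exp (- complex_of_real l * z)) + norm (complex_of_real (exp (- l)))"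
      by (rule norm_triangle_ineq4)
    also have "\<dots> \<le> 2"
    proof -
      have "norm (exp (- complex_of_real l * z)) \<le> 1" using l z by (simp add: norm_exp_eq_Re)
      moreover have "norm (complex_of_real (exp (- l))) \<le> 1" using l by simp
      ultimately show ?thesis by linarith
    qed
    finally have "norm (exp (- complex_of_real l * z) - complex_of_real (exp (- l))) / norm z \<le> 2 / norm z"
      using z by (simp add: divide_right_mono)
    also have "\<dots> \<le> 2 / R" using z by (simp add: frac_le)
    finally show "ennreal (norm (exp (- complex_of_real l * z) - complex_of_real (exp (- l))) / norm z) \<le> ennreal (min (2/R) (8 * (l / (l\<^sup>2 + 1))))"
      using b1 by (intro ennreal_leI) simp
  qed
  finally show ?thesis .
qed

lemma psi_lim:
  assumes space_M: "space M = {0<..}" and sets_M: "sets M = sets (restrict_space borel {0<..})"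
    and fin: "(\<integral>\<^sup>+ l. ennreal (l / (l\<^sup>2 + 1)) \<partial>M) < \<infinity>"
  shows "((\<lambda>R. \<integral>\<^sup>+ l. ennreal (min (2/R) (8 * (l / (l\<^sup>2 + 1)))) \<partial>M) \<longlongrightarrow> 0) at_top"
proof -
  define f where "f n l = ennreal (min (2/(real n + 1)) (8 * (l / (l\<^sup>2 + 1))))" for n :: nat and l :: real
  have meas: "f n \<in> borel_measurable M" for n
    unfolding f_def by (rule meas_M[OF sets_M]) measurable
  have dec: "decseq f"
    unfolding decseq_def f_def
    by (auto intro!: le_funI ennreal_leI min.mono frac_le)
  have fin0: "(\<integral>\<^sup>+ l. f i l \<partial>M) < \<infinity>" for i
  proof -
    have "(\<integral>\<^sup>+ l. f i l \<partial>M) \<le> (\<integral>\<^sup>+ l. ennreal 8 * ennreal (l / (l\<^sup>2 + 1)) \<partial>M)"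
      unfolding f_def
    proof (intro nn_integral_mono)
      fix l :: real assume "l \<in> space M"
      then have l: "l > 0" using space_M by simp
      have "ennreal (min (2 / (real i + 1)) (8 * (l / (l\<^sup>2 + 1)))) \<le> ennreal (8 * (l / (l\<^sup>2 + 1)))"
        by (rule ennreal_leI) simp
      also have "\<dots> = ennreal 8 * ennreal (l / (l\<^sup>2 + 1))" using l by (intro ennreal_mult) auto
      finally show "ennreal (min (2 / (real i + 1)) (8 * (l / (l\<^sup>2 + 1)))) \<le> ennreal 8 * ennreal (l / (l\<^sup>2 + 1))" .
    qed
    also have "\<dots> = ennreal 8 * (\<integral>\<^sup>+ l. ennreal (l / (l\<^sup>2 + 1)) \<partial>M)"
      by (rule nn_integral_cmult) (rule meas_M[OF sets_M], measurable)
    also have "\<dots> < \<infinity>" using fin by (simp add: ennreal_mult_less_top)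
    finally show ?thesis .
  qed
  have inf_eq: "(\<integral>\<^sup>+ l. (INF i. f i l) \<partial>M) = (INF i. integral\<^sup>N M (f i))"
    by (rule nn_integral_monotone_convergence_INF_decseq[OF dec meas fin0])
  have seq0: "(\<lambda>n. ennreal (2 / (real n + 1))) \<longlonglongrightarrow> 0"
  proof -
    have "(\<lambda>n. 2 / (real n + 1)) \<longlonglongrightarrow> 0" by real_asymp
    then show ?thesis using tendsto_ennrealI by fastforce
  qed
  have pt: "(INF i. f i l) = 0" for l
  proof -
    have decs: "decseq (\<lambda>n. ennreal (2 / (real n + 1)))"
      unfolding decseq_def by (auto intro!: ennreal_leI frac_le)
    have "(INF n. ennreal (2 / (real n + 1))) = 0"
      using LIMSEQ_unique[OF LIMSEQ_INF[OF decs] seq0] .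
    moreover have "(INF i. f i l) \<le> (INF n. ennreal (2 / (real n + 1)))"
      unfolding f_def by (intro INF_mono) (metis UNIV_I ennreal_leI min.cobounded1)
    ultimately show ?thesis by simp
  qed
  have decI: "decseq (\<lambda>i. integral\<^sup>N M (f i))"
    using dec unfolding decseq_def by (auto intro!: nn_integral_mono simp: le_fun_def)
  have lim: "(\<lambda>i. integral\<^sup>N M (f i)) \<longlonglongrightarrow> 0"
    using LIMSEQ_INF[OF decI] inf_eq pt by simp
  show ?thesis
  proof (rule order_tendstoI)
    fix a :: ennreal assume "a < 0" then show "eventually (\<lambda>R. a < (\<integral>\<^sup>+ l. ennreal (min (2/R) (8 * (l / (l\<^sup>2 + 1)))) \<partial>M)) at_top"
      by simp
  next
    fix a :: ennreal assume a: "0 < a"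
    from order_tendstoD(2)[OF lim a] obtain N where N: "integral\<^sup>N M (f N) < a"
      by (auto simp: eventually_sequentially)
    show "eventually (\<lambda>R. (\<integral>\<^sup>+ l. ennreal (min (2/R) (8 * (l / (l\<^sup>2 + 1)))) \<partial>M) < a) at_top"
      unfolding eventually_at_top_linorder
    proof (intro exI allI impI)
      fix R :: real assume R: "R \<ge> real N + 1"
      have "(\<integral>\<^sup>+ l. ennreal (min (2/R) (8 * (l / (l\<^sup>2 + 1)))) \<partial>M) \<le> integral\<^sup>N M (f N)"
        unfolding f_def using R by (intro nn_integral_mono ennreal_leI min.mono frac_le) auto
      then show "(\<integral>\<^sup>+ l. ennreal (min (2/R) (8 * (l / (l\<^sup>2 + 1)))) \<partial>M) < a" using N by simp
    qed
  qed
qed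

lemma exp_int_fin: "(\<integral>\<^sup>+ y. ennreal (exp (- pi * \<bar>y\<bar>)) \<partial>lborel) < \<infinity>"
proof -
  define d where "d = exponential_density pi"
  have dm[measurable]: "d \<in> borel_measurable borel" unfolding d_def exponential_density_def by measurable
  have d1: "(\<integral>\<^sup>+ y. ennreal (d y) \<partial>lborel) = 1"
  proof -
    interpret prob_space "density lborel d" unfolding d_def by (rule prob_space_exponential_density) simp
    have "emeasure (density lborel d) UNIV = 1" using emeasure_space_1 by simp
    then show ?thesis by (simp add: emeasure_density)
  qed
  have d2: "(\<integral>\<^sup>+ y. ennreal (d (- y)) \<partial>lborel) = 1"
    using nn_integral_real_affine[of "\<lambda>y. ennreal (d y)" "-1" 0] d1 by simp
  have dnn: "d y \<ge> 0" for y unfolding d_def exponential_density_def by simp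
  have "(\<integral>\<^sup>+ y. ennreal (exp (- pi * \<bar>y\<bar>)) \<partial>lborel) \<le> (\<integral>\<^sup>+ y. ennreal (1/pi) * (ennreal (d y) + ennreal (d (- y))) \<partial>lborel)"
  proof (rule nn_integral_mono)
    fix y :: real
    have "exp (- pi * \<bar>y\<bar>) \<le> (1/pi) * (d y + d (- y))"
      unfolding d_def exponential_density_def by (auto simp: field_simps)
    then show "ennreal (exp (- pi * \<bar>y\<bar>)) \<le> ennreal (1/pi) * (ennreal (d y) + ennreal (d (- y)))"
      using dnn[of y] dnn[of "-y"] by (simp add: ennreal_leI flip: ennreal_mult ennreal_plus)
  qed
  also have "\<dots> = ennreal (1/pi) * ((\<integral>\<^sup>+ y. ennreal (d y) \<partial>lborel) + (\<integral>\<^sup>+ y. ennreal (d (- y)) \<partial>lborel))"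
  proof -
    have dm2[measurable]: "(\<lambda>y. d (- y)) \<in> borel_measurable borel" by measurable
    have "(\<integral>\<^sup>+ y. ennreal (1/pi) * (ennreal (d y) + ennreal (d (- y))) \<partial>lborel)
        = ennreal (1/pi) * (\<integral>\<^sup>+ y. (ennreal (d y) + ennreal (d (- y))) \<partial>lborel)"
      by (rule nn_integral_cmult) measurable
    also have "(\<integral>\<^sup>+ y. (ennreal (d y) + ennreal (d (- y))) \<partial>lborel) = (\<integral>\<^sup>+ y. ennreal (d y) \<partial>lborel) + (\<integral>\<^sup>+ y. ennreal (d (- y)) \<partial>lborel)"
      by (rule nn_integral_add) measurable
    finally show ?thesis .
  qed
  also have "\<dots> < \<infinity>" using d1 d2 by (simp add: ennreal_mult_less_top flip: ennreal_plus)
  finally show ?thesis .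
qed


theorem lemma5p1:
  fixes M :: "real measure"
  assumes space_M: "space M = {0<..}"
    and sets_M: "sets M = sets (restrict_space borel {0<..})"
    and finite_int: "(\<integral>\<^sup>+ l. ennreal (l / (l\<^sup>2 + 1)) \<partial>M) < \<infinity>"
  shows "(\<forall>a b. 0 < a \<and> a < b \<longrightarrow>
           ((\<lambda>y. ennreal (exp (- pi * \<bar>y\<bar>)) *
              (\<integral>\<^sup>+ x\<in>{a..b}. ennreal (norm (F_mu M (Complex x y) / Complex x y)) \<partial>lborel))
             \<longlongrightarrow> 0) at_top \<and>
           ((\<lambda>y. ennreal (exp (- pi * \<bar>y\<bar>)) *
              (\<integral>\<^sup>+ x\<in>{a..b}. ennreal (norm (F_mu M (Complex x y) / Complex x y)) \<partial>lborel))
             \<longlongrightarrow> 0) at_bot)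
    \<and> (\<forall>\<eta>>0. (SUP x\<in>{\<eta>..}. (\<integral>\<^sup>+ y. ennreal (norm (F_mu M (Complex x y) / Complex x y)
                   * exp (- pi * \<bar>y\<bar>)) \<partial>lborel)) < \<infinity>)
    \<and> (((\<lambda>x. \<integral>\<^sup>+ y. ennreal (norm (F_mu M (Complex x y) / Complex x y)
                   * exp (- pi * \<bar>y\<bar>)) \<partial>lborel) \<longlongrightarrow> 0) at_top)"
proof (intro conjI allI impI)
  define K where "K = (\<integral>\<^sup>+ l. ennreal (l / (l\<^sup>2 + 1)) \<partial>M)"
  have K: "K < \<infinity>" using finite_int unfolding K_def .
  define E where "E = (\<integral>\<^sup>+ y. ennreal (exp (- pi * \<bar>y\<bar>)) \<partial>lborel)"
  have E: "E < \<infinity>" unfolding E_def by (rule exp_int_fin)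
  have Fe: "ennreal (norm (F_mu M z / z)) \<le> ennreal (2 * (1 + 1/\<eta>)^2) * K" if "\<eta> > 0" "Re z \<ge> \<eta>" for z \<eta>
    unfolding K_def by (rule F_bound_eta[OF space_M sets_M that])
  {
    fix a b :: real assume ab: "0 < a \<and> a < b"
    define T where "T y = (\<integral>\<^sup>+ x\<in>{a..b}. ennreal (norm (F_mu M (Complex x y) / Complex x y)) \<partial>lborel)" for y
    define B where "B = ennreal (2 * (1 + 1/a)^2) * K * ennreal (b - a)"
    have TB: "T y \<le> B" for y
    proof -
      have "T y \<le> (\<integral>\<^sup>+ x. (ennreal (2 * (1 + 1/a)^2) * K) * indicator {a..b} x \<partial>lborel)"
        unfolding T_def
      proof (rule nn_integral_mono)
        fix x :: real
        show "ennreal (norm (F_mu M (Complex x y) / Complex x y)) * indicator {a..b} x \<le> ennreal (2 * (1 + 1/a)^2) * K * indicator {a..b} x"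
        proof (cases "x \<in> {a..b}")
          case True
          then have "ennreal (norm (F_mu M (Complex x y) / Complex x y)) \<le> ennreal (2 * (1 + 1/a)^2) * K"
            using ab by (intro Fe) auto
          then show ?thesis using True by simp
        qed simp
      qed
      also have "\<dots> = B" unfolding B_def using ab by (simp add: nn_integral_cmult_indicator)
      finally show ?thesis .
    qed
    have "B < \<infinity>" using K unfolding B_def by (simp add: ennreal_mult_less_top)
    then have Bfin: "B \<noteq> \<infinity>" by simp
    have lim: "((\<lambda>y. ennreal (exp (- pi * \<bar>y\<bar>)) * T y) \<longlongrightarrow> 0) F"
      if e: "((\<lambda>y. exp (- pi * \<bar>y\<bar>)) \<longlongrightarrow> 0) F" for F
    proof (rule tendsto_sandwich[where f="\<lambda>_. 0" and h="\<lambda>y. ennreal (exp (- pi * \<bar>y\<bar>)) * B"])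
      show "\<forall>\<^sub>F y in F. ennreal (exp (- pi * \<bar>y\<bar>)) * T y \<le> ennreal (exp (- pi * \<bar>y\<bar>)) * B"
        using TB by (auto intro!: always_eventually mult_left_mono)
      have "((\<lambda>y. ennreal (exp (- pi * \<bar>y\<bar>)) * B) \<longlongrightarrow> ennreal 0 * B) F"
        using Bfin by (intro tendsto_mult_ennreal tendsto_ennrealI e) auto
      then show "((\<lambda>y. ennreal (exp (- pi * \<bar>y\<bar>)) * B) \<longlongrightarrow> 0) F" by simp
    qed auto
    have "((\<lambda>y. exp (- pi * \<bar>y\<bar>)) \<longlongrightarrow> 0) at_top" by real_asymp
    from lim[OF this] show "((\<lambda>y. ennreal (exp (- pi * \<bar>y\<bar>)) *
              (\<integral>\<^sup>+ x\<in>{a..b}. ennreal (norm (F_mu M (Complex x y) / Complex x y)) \<partial>lborel))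
             \<longlongrightarrow> 0) at_top" unfolding T_def .
    have "((\<lambda>y. exp (- pi * \<bar>y\<bar>)) \<longlongrightarrow> 0) at_bot" by real_asymp
    from lim[OF this] show "((\<lambda>y. ennreal (exp (- pi * \<bar>y\<bar>)) *
              (\<integral>\<^sup>+ x\<in>{a..b}. ennreal (norm (F_mu M (Complex x y) / Complex x y)) \<partial>lborel))
             \<longlongrightarrow> 0) at_bot" unfolding T_def .
  }
  fix \<eta> :: real assume eta: "\<eta> > 0"
  have "(SUP x\<in>{\<eta>..}. (\<integral>\<^sup>+ y. ennreal (norm (F_mu M (Complex x y) / Complex x y)
                   * exp (- pi * \<bar>y\<bar>)) \<partial>lborel)) \<le> ennreal (2 * (1 + 1/\<eta>)^2) * K * E"
  proof (rule SUP_least)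
    fix x assume x: "x \<in> {\<eta>..}"
    have "(\<integral>\<^sup>+ y. ennreal (norm (F_mu M (Complex x y) / Complex x y) * exp (- pi * \<bar>y\<bar>)) \<partial>lborel)
        \<le> (\<integral>\<^sup>+ y. (ennreal (2 * (1 + 1/\<eta>)^2) * K) * ennreal (exp (- pi * \<bar>y\<bar>)) \<partial>lborel)"
    proof (rule nn_integral_mono)
      fix y
      have "ennreal (norm (F_mu M (Complex x y) / Complex x y)) \<le> ennreal (2 * (1 + 1/\<eta>)^2) * K"
        using x eta by (intro Fe) auto
      then show "ennreal (norm (F_mu M (Complex x y) / Complex x y) * exp (- pi * \<bar>y\<bar>))
          \<le> (ennreal (2 * (1 + 1/\<eta>)^2) * K) * ennreal (exp (- pi * \<bar>y\<bar>))"
        by (simp add: ennreal_mult' mult_right_mono)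
    qed
    also have "\<dots> = ennreal (2 * (1 + 1/\<eta>)^2) * K * E"
      unfolding E_def by (rule nn_integral_cmult) measurable
    finally show "(\<integral>\<^sup>+ y. ennreal (norm (F_mu M (Complex x y) / Complex x y) * exp (- pi * \<bar>y\<bar>)) \<partial>lborel)
        \<le> ennreal (2 * (1 + 1/\<eta>)^2) * K * E" .
  qed
  also have "\<dots> < \<infinity>" using K E by (simp add: ennreal_mult_less_top)
  finally show "(SUP x\<in>{\<eta>..}. (\<integral>\<^sup>+ y. ennreal (norm (F_mu M (Complex x y) / Complex x y)
                   * exp (- pi * \<bar>y\<bar>)) \<partial>lborel)) < \<infinity>" .
next
  define E where "E = (\<integral>\<^sup>+ y. ennreal (exp (- pi * \<bar>y\<bar>)) \<partial>lborel)"
  have E: "E < \<infinity>" unfolding E_def by (rule exp_int_fin)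
  define \<psi> where "\<psi> R = (\<integral>\<^sup>+ l. ennreal (min (2/R) (8 * (l / (l\<^sup>2 + 1)))) \<partial>M)" for R :: real
  have psi: "(\<psi> \<longlongrightarrow> 0) at_top" unfolding \<psi>_def by (rule psi_lim[OF space_M sets_M finite_int])
  show "((\<lambda>x. \<integral>\<^sup>+ y. ennreal (norm (F_mu M (Complex x y) / Complex x y)
                   * exp (- pi * \<bar>y\<bar>)) \<partial>lborel) \<longlongrightarrow> 0) at_top"
  proof (rule tendsto_sandwich[where f="\<lambda>_. 0" and h="\<lambda>x. \<psi> x * E"])
    show "\<forall>\<^sub>F x in at_top. (\<integral>\<^sup>+ y. ennreal (norm (F_mu M (Complex x y) / Complex x y)
                   * exp (- pi * \<bar>y\<bar>)) \<partial>lborel) \<le> \<psi> x * E"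
      unfolding eventually_at_top_linorder
    proof (intro exI[of _ 1] allI impI)
      fix x :: real assume x: "x \<ge> 1"
      have "(\<integral>\<^sup>+ y. ennreal (norm (F_mu M (Complex x y) / Complex x y) * exp (- pi * \<bar>y\<bar>)) \<partial>lborel)
          \<le> (\<integral>\<^sup>+ y. \<psi> x * ennreal (exp (- pi * \<bar>y\<bar>)) \<partial>lborel)"
      proof (rule nn_integral_mono)
        fix y
        have nz: "x \<le> norm (Complex x y)" using abs_Re_le_cmod[of "Complex x y"] by simp
        have "ennreal (norm (F_mu M (Complex x y) / Complex x y)) \<le> \<psi> x"
          unfolding \<psi>_def using x nz by (intro F_bound_R[OF space_M]) auto
        then show "ennreal (norm (F_mu M (Complex x y) / Complex x y) * exp (- pi * \<bar>y\<bar>))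
            \<le> \<psi> x * ennreal (exp (- pi * \<bar>y\<bar>))"
          by (simp add: ennreal_mult' mult_right_mono)
      qed
      also have "\<dots> = \<psi> x * E"
        unfolding E_def by (rule nn_integral_cmult) measurable
      finally show "(\<integral>\<^sup>+ y. ennreal (norm (F_mu M (Complex x y) / Complex x y) * exp (- pi * \<bar>y\<bar>)) \<partial>lborel) \<le> \<psi> x * E" .
    qed
    have "((\<lambda>x. \<psi> x * E) \<longlongrightarrow> 0 * E) at_top"
      using E by (intro tendsto_mult_ennreal psi tendsto_const) auto
    then show "((\<lambda>x. \<psi> x * E) \<longlongrightarrow> 0) at_top" by simp
  qed auto
qed

end
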